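(* Let $r>1$, $p\in(0,1)$, $q=1-p$, and $z\ge 0$. Let $g_z:\mathbb{Z}_+\to\mathbb{R}$ be defined by $g_z(0)=0$ and, for $k\ge 1$, $$g_z(k)=-\sum_{j=k}^{\infty}\frac{r(r+1)\cdots(r+j-1)}{r(r+1)\cdots(r+k-1)}\,\frac{(k-1)!}{j!}\,q^{j-k}\Big[(j-z)^+-\mathbb{E}[(\mathrm{N}_{r,p}-z)^+]\Big].$$ Then for all $k\ge 0$: (i) $|g_z(k)|\le p^{-(r+1)}$; (ii) $|\Delta g_z(k)|\le 2p^{-(r+1)}-p^{-1}$.
   Context: $\mathbb{Z}_+=\{0,1,2,\ldots\}$. $x^+=\max\{x,0\}$. $\mathrm{N}_{r,p}$ denotes a negative binomial random variable with $\mathbb{P}(\mathrm{N}_{r,p}=k)=\binom{r+k-1}{k}p^rq^k=\frac{\Gamma(r+k)}{k!\,\Gamma(r)}p^rq^k$ for $k\in\mathbb{Z}_+$, where $r>1$ and $q=1-p\in(0,1)$. $\Delta g(k)=g(k+1)-g(k)$ is the forward difference. The function $g_z$ solves $q(r+k)g(k+1)-kg(k)=(k-z)^+-\mathbb{E}[(\mathrm{N}_{r,p}-z)^+]$ for $k\in\mathbb{Z}_+$. *)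

theory Defs
  imports "HOL-Analysis.Analysis"
begin

definition negbin_pmf :: "real \<Rightarrow> real \<Rightarrow> nat \<Rightarrow> real" where
  "negbin_pmf r p k = Gamma (r + real k) / (fact k * Gamma r) * p powr r * (1 - p) ^ k"

definition negbin_excess :: "real \<Rightarrow> real \<Rightarrow> real \<Rightarrow> real" where
  "negbin_excess r p z = (\<Sum>k. max (real k - z) 0 * negbin_pmf r p k)"

definition g_sol :: "real \<Rightarrow> real \<Rightarrow> real \<Rightarrow> nat \<Rightarrow> real" where
  "g_sol r p z k = (if k = 0 then 0 else
     - (\<Sum>i. pochhammer r (k + i) / pochhammer r k * (fact (k - 1) / fact (k + i))
            * (1 - p) ^ i * (max (real (k + i) - z) 0 - negbin_excess r p z)))"

end

theory Submission
  imports Defs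
begin

definition AA :: "real \<Rightarrow> real \<Rightarrow> nat \<Rightarrow> real" where
  "AA r q j = pochhammer r j / fact j * q ^ j"

lemma AA_pos: "r > 0 \<Longrightarrow> q > 0 \<Longrightarrow> AA r q j > 0"
  unfolding AA_def by (simp add: pochhammer_pos)

lemma AA_Suc0: "real (Suc j) * AA r q (Suc j) = pochhammer r (Suc j) / fact j * q ^ Suc j"
proof -
  have "real (Suc j) * AA r q (Suc j) = (real (Suc j) / fact (Suc j)) * pochhammer r (Suc j) * q^(Suc j)"
    by (simp add: AA_def)
  also have "real (Suc j) / fact (Suc j) = 1 / (fact j :: real)"
    by (simp add: fact_Suc del: of_nat_Suc)
  finally show ?thesis by simp
qed

lemma AA_Suc: "real (Suc j) * AA r q (Suc j) = q * (r + real j) * AA r q j"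
  unfolding AA_Suc0 by (simp add: AA_def pochhammer_rec' field_simps)

lemma AA_Suc': "real (Suc j) * AA r q (Suc j) = r * q * AA (r + 1) q j"
  unfolding AA_Suc0 by (simp add: AA_def pochhammer_rec field_simps)

lemma AA_sums:
  assumes "r > 0" "0 < q" "q < 1"
  shows "AA r q sums (1 - q) powr (-r)"
proof -
  have "(\<lambda>n. ((-r) gchoose n) * (-q)^n) sums (1 + -q) powr (-r)"
    using assms by (intro gen_binomial_real) simp
  moreover have "((-r) gchoose n) * (-q)^n = AA r q n" for n
  proof -
    have "((-r) gchoose n) * (-q)^n = ((-1)^n * (-1)^n) * (pochhammer r n / fact n * q ^ n)"
      unfolding gbinomial_pochhammer power_minus[of q n] by (simp add: mult_ac)
    also have "(-1::real)^n * (-1)^n = 1"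
      by (simp flip: power_mult_distrib)
    finally show ?thesis by (simp add: AA_def)
  qed
  ultimately show ?thesis by simp
qed

lemma AA_j_summable:
  assumes "r > 0" "0 < q" "q < 1"
  shows "summable (\<lambda>j. real j * AA r q j)"
proof -
  have "summable (\<lambda>j. r * q * AA (r + 1) q j)"
    using AA_sums[of "r+1" q] assms by (intro summable_mult) (auto simp: sums_iff)
  hence "summable (\<lambda>j. real (Suc j) * AA r q (Suc j))"
    by (simp only: AA_Suc')
  thus ?thesis by (subst summable_Suc_iff[symmetric]) simp
qed

lemma pmf_AA:
  assumes "r > 0"
  shows "negbin_pmf r p j = p powr r * AA r (1 - p) j"
proof -
  have "r \<notin> \<int>\<^sub>\<le>\<^sub>0" using assms by (auto elim!: nonpos_Ints_cases)
  hence "pochhammer r j = Gamma (r + real j) / Gamma r" by (rule pochhammer_Gamma)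
  thus ?thesis unfolding negbin_pmf_def AA_def by (simp add: field_simps)
qed

lemma tail_nonneg:
  fixes a u :: "nat \<Rightarrow> real"
  assumes mono: "mono u" and apos: "\<And>j. a j \<ge> 0"
    and s: "(\<lambda>j. a j * (u j - m)) sums 0"
  shows "0 \<le> (\<Sum>i. a (k + i) * (u (k + i) - m))"
proof -
  let ?t = "\<lambda>j. a j * (u j - m)"
  have sm: "summable ?t" and s0: "suminf ?t = 0" using s by (auto simp: sums_iff)
  have sm2: "summable (\<lambda>i. ?t (k + i))"
    using summable_ignore_initial_segment[OF sm, of k] by (simp add: add.commute)
  have split: "suminf ?t = (\<Sum>i. ?t (i + k)) + (\<Sum>i<k. ?t i)"
    by (rule suminf_split_initial_segment[OF sm])
  have eq: "(\<Sum>i. ?t (i + k)) = (\<Sum>i. ?t (k + i))" by (simp add: add.commute)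
  show ?thesis
  proof (cases "m \<le> u k")
    case True
    have "\<And>i. 0 \<le> ?t (k + i)"
    proof -
      fix i
      have "u k \<le> u (k + i)" using mono by (simp add: monoD)
      thus "0 \<le> ?t (k + i)" using True apos[of "k+i"] by simp
    qed
    thus ?thesis using sm2 by (intro suminf_nonneg) auto
  next
    case False
    have "\<And>j. j \<in> {..<k} \<Longrightarrow> ?t j \<le> 0"
    proof -
      fix j assume "j \<in> {..<k}"
      hence "u j \<le> u k" using mono by (simp add: monoD)
      thus "?t j \<le> 0" using False apos[of j] by (simp add: mult_nonneg_nonpos)
    qed
    hence "(\<Sum>i<k. ?t i) \<le> 0" by (rule sum_nonpos)
    thus ?thesis using split s0 eq by simp
  qed
qed

lemma telescope_AA:
  assumes "0 < p" "p < 1" "r > 0"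
  shows "(\<lambda>i. AA r (1-p) (k+i) * (real (k+i) - r*(1-p)/p)) sums (real k * AA r (1-p) k / p)"
proof -
  define F where "F j = real j * AA r (1-p) j / p" for j
  have "(\<lambda>j. real j * AA r (1-p) j) \<longlonglongrightarrow> 0"
    using AA_j_summable[of r "1-p"] assms by (intro summable_LIMSEQ_zero) auto
  hence "(\<lambda>j. real j * AA r (1-p) j / p) \<longlonglongrightarrow> 0 / p"
    by (intro tendsto_divide tendsto_const) (use assms in auto)
  hence "F \<longlonglongrightarrow> 0" by (simp add: F_def[abs_def])
  hence "(\<lambda>n. F (n + k)) \<longlonglongrightarrow> 0" by (rule LIMSEQ_ignore_initial_segment)
  hence "(\<lambda>n. F (n + k) - F (Suc n + k)) sums (F (0 + k) - 0)" by (rule telescope_sums')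
  moreover have tel: "F j - F (Suc j) = AA r (1-p) j * (real j - r*(1-p)/p)" for j
  proof -
    have "F j - F (Suc j) = (real j * AA r (1-p) j - (1-p)*(r + real j) * AA r (1-p) j) / p"
      unfolding F_def using AA_Suc[of j r "1-p"] by (simp add: diff_divide_distrib)
    also have "\<dots> = AA r (1-p) j * (real j - r*(1-p)/p)"
      using assms by (simp add: field_simps)
    finally show ?thesis .
  qed
  moreover have "(\<lambda>n. F (n + k) - F (Suc n + k)) = (\<lambda>i. AA r (1-p) (k+i) * (real (k+i) - r*(1-p)/p))"
  proof (rule ext)
    fix n
    have "F (n + k) - F (Suc n + k) = F (k + n) - F (Suc (k + n))" by (simp add: add.commute)
    also have "\<dots> = AA r (1-p) (k+n) * (real (k+n) - r*(1-p)/p)" by (rule tel)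
    finally show "F (n + k) - F (Suc n + k) = AA r (1-p) (k+n) * (real (k+n) - r*(1-p)/p)" .
  qed
  ultimately show ?thesis by (simp add: F_def)
qed

lemma g_bounds:
  fixes r p z :: real and k :: nat
  assumes r: "r > 0" and p: "0 < p" "p < 1" and z: "z \<ge> 0" and k: "k \<ge> 1"
  shows "- 1 / p \<le> g_sol r p z k \<and> g_sol r p z k \<le> 0"
proof -
  define q where "q = 1 - p"
  have q: "0 < q" "q < 1" using p by (auto simp: q_def)
  define a where "a = AA r q"
  define h where "h j = max (real j - z) 0" for j :: nat
  define \<mu> where "\<mu> = negbin_excess r p z"
  define m0 where "m0 = r * q / p"
  define u where "u j = real j - h j" for j :: nat
  have apos: "a j > 0" for j using AA_pos[OF r q(1)] by (simp add: a_def)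
  have asum: "a sums p powr (-r)" using AA_sums[OF r q] by (simp add: a_def q_def)
  have jsum: "summable (\<lambda>j. real j * a j)" using AA_j_summable[OF r q] by (simp add: a_def)
  have hsum: "summable (\<lambda>j. a j * h j)"
  proof (rule summable_comparison_test[OF _ jsum])
    show "\<exists>N. \<forall>n\<ge>N. norm (a n * h n) \<le> real n * a n"
      using apos z by (intro exI[of _ 0]) (auto simp: h_def max_def less_imp_le)
  qed
  have mu: "\<mu> = p powr r * (\<Sum>j. a j * h j)"
  proof -
    have "\<mu> = (\<Sum>j. p powr r * (a j * h j))"
      unfolding \<mu>_def negbin_excess_def
      by (intro suminf_cong) (simp add: pmf_AA[OF r] a_def q_def h_def mult_ac)
    also have "\<dots> = p powr r * (\<Sum>j. a j * h j)" by (rule suminf_mult[OF hsum])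
    finally show ?thesis .
  qed
  have hs0: "(\<lambda>j. a j * (h j - \<mu>)) sums 0"
  proof -
    have "(\<lambda>j. a j * h j - a j * \<mu>) sums ((\<Sum>j. a j * h j) - p powr (-r) * \<mu>)"
      by (intro sums_diff summable_sums[OF hsum] sums_mult2 asum)
    moreover have "p powr (-r) * \<mu> = (\<Sum>j. a j * h j)"
      using p by (simp add: mu powr_minus field_simps)
    ultimately show ?thesis by (simp add: right_diff_distrib)
  qed
  have js0: "(\<lambda>j. a j * (real j - m0)) sums 0"
    using telescope_AA[OF p r, of 0] by (simp add: a_def q_def m0_def)
  have us0: "(\<lambda>j. a j * (u j - (m0 - \<mu>))) sums 0"
  proof -
    have "(\<lambda>j. a j * (real j - m0) - a j * (h j - \<mu>)) sums (0 - 0)"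
      by (intro sums_diff js0 hs0)
    thus ?thesis by (simp add: u_def algebra_simps)
  qed
  have hmono: "mono h" by (auto simp: mono_def h_def max_def)
  have umono: "mono u" by (auto simp: mono_def u_def h_def max_def)
  have Th: "0 \<le> (\<Sum>i. a (k + i) * (h (k + i) - \<mu>))"
    by (rule tail_nonneg[OF hmono _ hs0]) (use apos in \<open>auto intro: less_imp_le\<close>)
  have Tu: "0 \<le> (\<Sum>i. a (k + i) * (u (k + i) - (m0 - \<mu>)))"
    by (rule tail_nonneg[OF umono _ us0]) (use apos in \<open>auto intro: less_imp_le\<close>)
  have I: "(\<lambda>i. a (k + i) * (real (k + i) - m0)) sums (real k * a k / p)"
    using telescope_AA[OF p r, of k] by (simp add: a_def q_def m0_def)
  have shift: "summable (\<lambda>i. f (k + i))" if "summable f" for f :: "nat \<Rightarrow> real"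
    using summable_ignore_initial_segment[OF that, of k] by (simp add: add.commute)
  have hsumk: "summable (\<lambda>i. a (k + i) * (h (k + i) - \<mu>))"
    using shift[of "\<lambda>j. a j * (h j - \<mu>)"] hs0 by (auto simp: sums_iff)
  have usumk: "summable (\<lambda>i. a (k + i) * (u (k + i) - (m0 - \<mu>)))"
    using shift[of "\<lambda>j. a j * (u j - (m0 - \<mu>))"] us0 by (auto simp: sums_iff)
  have decomp: "(\<Sum>i. a (k + i) * (h (k + i) - \<mu>)) =
      real k * a k / p - (\<Sum>i. a (k + i) * (u (k + i) - (m0 - \<mu>)))"
  proof -
    have "(\<lambda>i. a (k + i) * (real (k + i) - m0) - a (k + i) * (u (k + i) - (m0 - \<mu>)))
           sums (real k * a k / p - (\<Sum>i. a (k + i) * (u (k + i) - (m0 - \<mu>))))"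
      by (intro sums_diff I summable_sums[OF usumk])
    thus ?thesis by (simp add: u_def algebra_simps sums_iff)
  qed
  have coef: "pochhammer r (k + i) / pochhammer r k * (fact (k - 1) / fact (k + i)) * (1 - p) ^ i
      = inverse (real k * a k) * a (k + i)" for i
  proof -
    have fk: "fact k = real k * fact (k - 1)" using k by (simp add: fact_reduce)
    have "pochhammer r k > 0" using r by (simp add: pochhammer_pos)
    moreover have "(fact (k - 1) :: real) > 0" by simp
    moreover have "(fact (k + i) :: real) > 0" by simp
    ultimately show ?thesis using k q
      unfolding a_def AA_def q_def[symmetric] fk by (simp add: power_add field_simps)
  qed
  have "g_sol r p z k = - (\<Sum>i. pochhammer r (k + i) / pochhammer r k * (fact (k - 1) / fact (k + i)) * (1 - p) ^ i * (h (k + i) - \<mu>))"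
    using k unfolding g_sol_def h_def \<mu>_def by simp
  also have "\<dots> = - (\<Sum>i. inverse (real k * a k) * (a (k + i) * (h (k + i) - \<mu>)))"
    unfolding coef by (simp only: mult.assoc)
  also have "\<dots> = - (inverse (real k * a k) * (\<Sum>i. a (k + i) * (h (k + i) - \<mu>)))"
    by (simp add: suminf_mult[OF hsumk])
  finally have g: "g_sol r p z k = - (inverse (real k * a k) * (\<Sum>i. a (k + i) * (h (k + i) - \<mu>)))" .
  have kpos: "real k * a k > 0" using k apos[of k] by simp
  have g0: "g_sol r p z k \<le> 0" unfolding g using Th kpos by (simp add: mult_nonneg_nonneg del: inverse_mult_distrib)
  define Su where "Su = (\<Sum>i. a (k + i) * (u (k + i) - (m0 - \<mu>)))"
  have "g_sol r p z k = - (inverse (real k * a k) * (real k * a k / p - Su))"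
    unfolding g decomp Su_def ..
  also have "\<dots> = -1/p + inverse (real k * a k) * Su"
  proof -
    have "inverse (real k * a k) * (real k * a k / p) = 1 / p"
    proof -
      have i1: "inverse (real k * a k) * (real k * a k) = 1" using kpos by (intro left_inverse) (metis less_irrefl)
      show ?thesis using i1 by (simp del: inverse_mult_distrib)
    qed
    thus ?thesis by (simp add: right_diff_distrib del: inverse_mult_distrib)
  qed
  finally have g2: "g_sol r p z k = -1/p + inverse (real k * a k) * Su" .
  have "0 \<le> inverse (real k * a k) * Su" using Tu kpos unfolding Su_def[symmetric]
    by (simp add: mult_nonneg_nonneg del: inverse_mult_distrib)
  thus ?thesis using g0 g2 by simp
qed

theorem lemma2p1:
  fixes r p z :: real
  assumes "r > 1" and "0 < p" and "p < 1" and "z \<ge> 0"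
  shows "\<forall>k::nat. \<bar>g_sol r p z k\<bar> \<le> p powr (-(r + 1))
           \<and> \<bar>g_sol r p z (k + 1) - g_sol r p z k\<bar> \<le> 2 * p powr (-(r + 1)) - 1 / p"
proof
  fix k :: nat
  have gb: "- 1 / p \<le> g_sol r p z j \<and> g_sol r p z j \<le> 0" for j
  proof (cases "j = 0")
    case True thus ?thesis using assms by (simp add: g_sol_def)
  next
    case False thus ?thesis using assms by (intro g_bounds) auto
  qed
  have "p powr (r + 1) \<le> p"
    using powr_le_one_le[of p "r + 1"] assms by simp
  moreover have "p powr (-(r + 1)) = 1 / p powr (r + 1)"
    using powr_minus[of p "r + 1"] by (simp add: divide_inverse)
  moreover have "0 < p powr (r + 1)" using assms by simp
  ultimately have B: "1 / p \<le> p powr (-(r + 1))"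
    by (simp add: frac_le)
  show "\<bar>g_sol r p z k\<bar> \<le> p powr (-(r + 1))
           \<and> \<bar>g_sol r p z (k + 1) - g_sol r p z k\<bar> \<le> 2 * p powr (-(r + 1)) - 1 / p"
  proof -
    have m: "- 1 / p = - (1 / p)" by simp
    have b1: "- (1/p) \<le> g_sol r p z k" "g_sol r p z k \<le> 0"
      using gb[of k] unfolding m by auto
    have b2: "- (1/p) \<le> g_sol r p z (k + 1)" "g_sol r p z (k + 1) \<le> 0"
      using gb[of "k + 1"] unfolding m by auto
    have c1: "\<bar>g_sol r p z k\<bar> \<le> p powr (-(r + 1))"
      unfolding abs_le_iff using b1 B by linarith
    have c2: "\<bar>g_sol r p z (k + 1) - g_sol r p z k\<bar> \<le> 2 * p powr (-(r + 1)) - 1 / p"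
      unfolding abs_le_iff using b1 b2 B by linarith
    show ?thesis using c1 c2 by blast
  qed
qed

end
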